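(* Let $\vec{\mathcal U}_1,\vec{\mathcal U}_2,\vec{\mathcal V}_1,\vec{\mathcal V}_2\in\Upsilon$. If $\preceq_{\vec{\mathcal U}_1}=\preceq_{\vec{\mathcal U}_2}$ and $\preceq_{\vec{\mathcal V}_1}=\preceq_{\vec{\mathcal V}_2}$, then $\preceq_{\vec{\mathcal U}_1*\vec{\mathcal V}_1}=\preceq_{\vec{\mathcal U}_2*\vec{\mathcal V}_2}$.
   Context: $L$ is a propositional language built from a finite set of propositional variables with the connectives $\neg,\wedge,\vee,\rightarrow,\top,\bot$; $W$ is the finite set of propositional worlds. For $\theta\in L$, $S_\theta=\{w\in W\mid w\models\theta\}$. Sequences: finite sequences $\vec{\mathcal U}=(\mathcal U_0,\ldots,\mathcal U_k)$ ($k\ge0$) of mutually disjoint subsets of $W$ (components may be empty, possibly repeatedly). $\mathrm{rank}^{\vec{\mathcal U}}(\theta)$ is the least $i$ with $\mathcal U_i\cap S_\theta\neq\emptyset$, and $\infty$ if none (with $i<\infty$ for every integer $i$). $\theta\mid\!\sim_{\vec{\mathcal U}}\phi$ iff either $\mathrm{rank}^{\vec{\mathcal U}}(\theta)<\mathrm{rank}^{\vec{\mathcal U}}(\theta\wedge\neg\phi)$ or $\mathrm{rank}^{\vec{\mathcal U}}(\theta)=\infty$. $\vec{\mathcal U}$ is full iff $\bigcup_i\mathcal U_i=W$, empty iff $\bigcup_i\mathcal U_i=\emptyset$; $\Upsilon$ is the set of such sequences which are full or empty. For $\vec{\mathcal U}\in\Upsilon$, $\theta\preceq_{\vec{\mathcal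 U}}\phi$ iff (not $\neg\theta\vee\neg\phi\mid\!\sim_{\vec{\mathcal U}}\theta$) or $\neg\phi\mid\!\sim_{\vec{\mathcal U}}\bot$. Sequence revision $*:\Upsilon\times\Upsilon\to\Upsilon$: for $\vec{\mathcal U}=(\mathcal U_0,\ldots,\mathcal U_k)$ and $\vec{\mathcal V}=(\mathcal V_0,\ldots,\mathcal V_m)$, if $\vec{\mathcal U}$ is full then $\vec{\mathcal U}*\vec{\mathcal V}=(\mathcal U_0\cap\mathcal V_0,\ldots,\mathcal U_k\cap\mathcal V_0,\ \mathcal U_0\cap\mathcal V_1,\ldots,\mathcal U_k\cap\mathcal V_1,\ \ldots,\ \mathcal U_0\cap\mathcal V_m,\ldots,\mathcal U_k\cap\mathcal V_m)$; otherwise $\vec{\mathcal U}*\vec{\mathcal V}=\vec{\mathcal V}$. *)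

theory Defs
  imports Main "HOL-Library.Extended_Nat"
begin

datatype 'v form =
    Var 'v | Neg "'v form" | Conj "'v form" "'v form" | Disj "'v form" "'v form"
  | Imp "'v form" "'v form" | Top | Bot

text \<open>A world is the set of variables true in it; W is the set of all worlds (UNIV).\<close>
type_synonym 'v world = "'v set"

fun sat :: "'v world \<Rightarrow> 'v form \<Rightarrow> bool" where
  "sat w (Var p) = (p \<in> w)"
| "sat w (Neg a) = (\<not> sat w a)"
| "sat w (Conj a b) = (sat w a \<and> sat w b)"
| "sat w (Disj a b) = (sat w a \<or> sat w b)"
| "sat w (Imp a b) = (sat w a \<longrightarrow> sat w b)"
| "sat w Top = True"
| "sat w Bot = False"

definition models_set :: "'v form \<Rightarrow> 'v world set" ("S") where
  "S \<theta> = {w. sat w \<theta>}"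

definition is_seq :: "'v world set list \<Rightarrow> bool" where
  "is_seq U \<longleftrightarrow> U \<noteq> [] \<and>
     (\<forall>i j. i < length U \<longrightarrow> j < length U \<longrightarrow> i \<noteq> j \<longrightarrow> U ! i \<inter> U ! j = {})"

definition seq_rank :: "'v world set list \<Rightarrow> 'v form \<Rightarrow> enat" where
  "seq_rank U \<theta> =
     (if \<exists>i < length U. U ! i \<inter> S \<theta> \<noteq> {}
      then enat (LEAST i. i < length U \<and> U ! i \<inter> S \<theta> \<noteq> {}) else \<infinity>)"

definition nm_inf :: "'v world set list \<Rightarrow> 'v form \<Rightarrow> 'v form \<Rightarrow> bool" where
  "nm_inf U \<theta> \<phi> \<longleftrightarrow>
     seq_rank U \<theta> < seq_rank U (Conj \<theta> (Neg \<phi>)) \<or> seq_rank U \<theta> = \<infinity>"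

definition full_seq :: "'v world set list \<Rightarrow> bool" where
  "full_seq U \<longleftrightarrow> \<Union>(set U) = UNIV"

definition empty_seq :: "'v world set list \<Rightarrow> bool" where
  "empty_seq U \<longleftrightarrow> \<Union>(set U) = {}"

definition Upsilon :: "'v world set list set" where
  "Upsilon = {U. is_seq U \<and> (full_seq U \<or> empty_seq U)}"

definition seq_pref :: "'v world set list \<Rightarrow> 'v form \<Rightarrow> 'v form \<Rightarrow> bool" where
  "seq_pref U \<theta> \<phi> \<longleftrightarrow>
     \<not> nm_inf U (Disj (Neg \<theta>) (Neg \<phi>)) \<theta> \<or> nm_inf U (Neg \<phi>) Bot"

text \<open>Sequence revision: if U is full, (U_0\<inter>V_0,...,U_k\<inter>V_0, ..., U_0\<inter>V_m,...,U_k\<inter>V_m); else V.\<close>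
definition seq_rev :: "'v world set list \<Rightarrow> 'v world set list \<Rightarrow> 'v world set list" where
  "seq_rev U V = (if full_seq U then concat (map (\<lambda>v. map (\<lambda>u. u \<inter> v) U) V) else V)"

end

theory Submission imports Defs begin

lemma S_simps[simp]: "S (Neg a) = - S a" "S (Conj a b) = S a \<inter> S b" "S (Disj a b) = S a \<union> S b"
  "S Bot = {}" "S Top = UNIV"
  by (auto simp: models_set_def)

lemma lits_ex:
  fixes w :: "'v world"
  assumes "finite P"
  shows "\<exists>\<theta>. \<forall>w'. sat w' \<theta> \<longleftrightarrow> (\<forall>p\<in>P. p \<in> w' \<longleftrightarrow> p \<in> w)"
  using assms
proof (induction P rule: finite_induct)
  case empty
  then show ?case by (intro exI[of _ Top]) simp
next
  case (insert x F)
  then obtain \<theta> where th: "\<forall>w'. sat w' \<theta> \<longleftrightarrow> (\<forall>p\<in>F. p \<in> w' \<longleftrightarrow> p \<in> w)" by blast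
  show ?case
  proof (cases "x \<in> w")
    case True
    then show ?thesis using th by (intro exI[of _ "Conj (Var x) \<theta>"]) auto
  next
    case False
    then show ?thesis using th by (intro exI[of _ "Conj (Neg (Var x)) \<theta>"]) auto
  qed
qed

lemma single_ex:
  fixes w :: "('v::finite) world"
  shows "\<exists>\<theta>. S \<theta> = {w}"
proof -
  obtain \<theta> where th: "\<forall>w'. sat w' \<theta> \<longleftrightarrow> (\<forall>p\<in>(UNIV::'v set). p \<in> w' \<longleftrightarrow> p \<in> w)"
    using lits_ex[of "UNIV::'v set" w] by auto
  have "S \<theta> = {w}" using th by (auto simp: models_set_def)
  then show ?thesis by blast
qed

lemma S_surj:
  fixes A :: "('v::finite) world set"
  shows "\<exists>\<theta>. S \<theta> = A"
proof -
  have "finite A" by simp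
  then show ?thesis
  proof (induction A rule: finite_induct)
    case empty
    then show ?case by (intro exI[of _ Bot]) simp
  next
    case (insert x F)
    then obtain \<theta> where "S \<theta> = F" by blast
    moreover obtain \<psi> where "S \<psi> = {x}" using single_ex by blast
    ultimately show ?case by (intro exI[of _ "Disj \<psi> \<theta>"]) auto
  qed
qed

definition srk :: "'v world set list \<Rightarrow> 'v world set \<Rightarrow> enat" where
  "srk U A = Inf {enat i | i. i < length U \<and> U ! i \<inter> A \<noteq> {}}"

lemma least_Inf: "(if \<exists>i. P i then enat (LEAST i. P i) else \<infinity>) = Inf {enat i | i. P i}"
proof (cases "\<exists>i. P i")
  case True
  have "Inf {enat i | i. P i} \<le> enat (LEAST i. P i)"
    by (rule Inf_lower) (auto intro: LeastI_ex[OF True])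
  moreover have "enat (LEAST i. P i) \<le> Inf {enat i | i. P i}"
    by (rule Inf_greatest) (auto intro: Least_le)
  ultimately show ?thesis using True by simp
next
  case False
  then show ?thesis by (simp add: top_enat_def[symmetric])
qed

lemma seq_rank_srk: "seq_rank U \<theta> = srk U (S \<theta>)"
  unfolding seq_rank_def srk_def
  using least_Inf[of "\<lambda>i. i < length U \<and> U ! i \<inter> S \<theta> \<noteq> {}"] by simp

lemma srk_Un: "srk U (A \<union> B) = min (srk U A) (srk U B)"
proof -
  have "{enat i | i. i < length U \<and> U ! i \<inter> (A \<union> B) \<noteq> {}} =
        {enat i | i. i < length U \<and> U ! i \<inter> A \<noteq> {}} \<union> {enat i | i. i < length U \<and> U ! i \<inter> B \<noteq> {}}"
    by blast
  then show ?thesis unfolding srk_def by (simp add: Inf_union_distrib inf_min)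
qed

lemma pref_srk: "seq_pref U \<theta> \<phi> \<longleftrightarrow> srk U (- S \<theta>) \<le> srk U (- S \<phi>)"
proof -
  have e: "S (Conj (Disj (Neg \<theta>) (Neg \<phi>)) (Neg \<theta>)) = - S \<theta>" by auto
  show ?thesis
    unfolding seq_pref_def nm_inf_def seq_rank_srk e
    by (cases "srk U (- S \<phi>) = \<infinity>") (auto simp: srk_Un min_def not_le dest: enat_ile)
qed


lemma srk_mono: "A \<subseteq> B \<Longrightarrow> srk U B \<le> srk U A"
  unfolding srk_def by (rule Inf_superset_mono) blast

lemma srk_min:
  assumes "a0 \<in> A" "\<forall>a\<in>A. srk U {a0} \<le> srk U {a}"
  shows "srk U A = srk U {a0}"
proof (rule antisym)
  show "srk U A \<le> srk U {a0}" using assms(1) by (intro srk_mono) auto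
  show "srk U {a0} \<le> srk U A"
    unfolding srk_def[of U A]
  proof (rule Inf_greatest)
    fix x assume "x \<in> {enat i |i. i < length U \<and> U ! i \<inter> A \<noteq> {}}"
    then obtain i a where i: "x = enat i" "i < length U" "a \<in> U ! i" "a \<in> A" by blast
    have "srk U {a} \<le> enat i" unfolding srk_def by (rule Inf_lower) (use i in auto)
    moreover have "srk U {a0} \<le> srk U {a}" using assms(2) i(4) by blast
    ultimately show "srk U {a0} \<le> x" using i(1) by simp
  qed
qed

lemma srk_emptyset[simp]: "srk U {} = \<infinity>"
  unfolding srk_def by (simp add: top_enat_def[symmetric])

lemma full_fin: "full_seq U \<Longrightarrow> srk U {a} \<noteq> \<infinity>"
proof -
  assume "full_seq U"
  then obtain u where "u \<in> set U" "a \<in> u" unfolding full_seq_def by blast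
  then obtain i where i: "i < length U" "a \<in> U ! i" by (metis in_set_conv_nth)
  have "srk U {a} \<le> enat i" unfolding srk_def by (rule Inf_lower) (use i in auto)
  then show ?thesis by (auto dest: enat_ile)
qed

lemma empty_inf: "empty_seq U \<Longrightarrow> srk U A = \<infinity>"
proof -
  assume "empty_seq U"
  then have "\<forall>i<length U. U ! i = {}" unfolding empty_seq_def using nth_mem by blast
  then have "{enat i |i. i < length U \<and> U ! i \<inter> A \<noteq> {}} = {}" by auto
  then show ?thesis by (simp only: srk_def Inf_empty top_enat_def)
qed

lemma full_iff: "U \<in> Upsilon \<Longrightarrow> full_seq U \<longleftrightarrow> \<not> srk U {} \<le> srk U UNIV"
proof -
  assume U: "U \<in> Upsilon"
  show ?thesis
  proof
    assume "full_seq U"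
    then have "srk U {undefined} \<noteq> \<infinity>" by (rule full_fin)
    moreover have "srk U UNIV \<le> srk U {undefined}" by (rule srk_mono) auto
    ultimately show "\<not> srk U {} \<le> srk U UNIV" by (auto simp: top_enat_def dest: enat_ile)
  next
    assume "\<not> srk U {} \<le> srk U UNIV"
    then show "full_seq U" using U empty_inf unfolding Upsilon_def by fastforce
  qed
qed

lemma G:
  fixes U1 U2 :: "('v::finite) world set list"
  assumes eq: "\<And>a b. srk U1 {a} \<le> srk U1 {b} \<longleftrightarrow> srk U2 {a} \<le> srk U2 {b}"
    and f1: "\<And>a. srk U1 {a} \<noteq> \<infinity>" and f2: "\<And>a. srk U2 {a} \<noteq> \<infinity>"
  shows "srk U1 A \<le> srk U1 B \<longleftrightarrow> srk U2 A \<le> srk U2 B"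
proof -
  have minex: "\<exists>a0\<in>X. srk U1 X = srk U1 {a0} \<and> srk U2 X = srk U2 {a0}" if "X \<noteq> {}" for X :: "'v world set"
  proof -
    have fin: "finite ((\<lambda>a. srk U1 {a}) ` X)" by simp
    define m where "m = Min ((\<lambda>a. srk U1 {a}) ` X)"
    have "m \<in> (\<lambda>a. srk U1 {a}) ` X" unfolding m_def using fin that by (intro Min_in) auto
    then obtain a0 where a0: "a0 \<in> X" "srk U1 {a0} = m" by blast
    have le1: "\<forall>a\<in>X. srk U1 {a0} \<le> srk U1 {a}" using a0 fin unfolding m_def by auto
    then have le2: "\<forall>a\<in>X. srk U2 {a0} \<le> srk U2 {a}" using eq by blast
    show ?thesis using srk_min[OF a0(1) le1] srk_min[OF a0(1) le2] a0(1) by blast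
  qed
  have nonempty_fin: "srk U X \<noteq> \<infinity>" if ne: "X \<noteq> {}" and fa: "\<And>a. srk U {a} \<noteq> \<infinity>" for U and X :: "'v world set"
  proof -
    obtain a where "a \<in> X" using ne by blast
    then have "srk U X \<le> srk U {a}" by (intro srk_mono) auto
    then show ?thesis using fa[of a] by (auto simp: top_enat_def dest: enat_ile)
  qed
  show ?thesis
  proof (cases "A = {}")
    case True
    then show ?thesis using nonempty_fin[of B U1] nonempty_fin[of B U2] f1 f2
      by (cases "B = {}") (auto simp: top_enat_def)
  next
    case An: False
    show ?thesis
    proof (cases "B = {}")
      case True
      then show ?thesis by simp
    next
      case False
      then show ?thesis using minex[OF An] minex[OF False] eq by metis
    qed
  qed
qed

lemma pref_Q:
  fixes U1 U2 :: "('v::finite) world set list"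
  assumes "seq_pref U1 = seq_pref U2"
  shows "srk U1 A \<le> srk U1 B \<longleftrightarrow> srk U2 A \<le> srk U2 B"
proof -
  obtain \<theta> where t: "S \<theta> = - A" using S_surj by blast
  obtain \<phi> where p: "S \<phi> = - B" using S_surj by blast
  have "seq_pref U1 \<theta> \<phi> = seq_pref U2 \<theta> \<phi>" using assms by simp
  then show ?thesis unfolding pref_srk t p by simp
qed

lemma Q_pref:
  assumes "\<And>A B. srk U1 A \<le> srk U1 B \<longleftrightarrow> srk U2 A \<le> srk U2 B"
  shows "seq_pref U1 = seq_pref U2"
  using assms by (intro ext) (simp add: pref_srk)

lemma srk_single_eq:
  assumes "i < length U" "w \<in> U ! i" "\<forall>j<i. w \<notin> U ! j"
  shows "srk U {w} = enat i"
proof (rule antisym)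
  show "srk U {w} \<le> enat i" unfolding srk_def by (rule Inf_lower) (use assms in auto)
  show "enat i \<le> srk U {w}" unfolding srk_def
    by (rule Inf_greatest) (use assms in \<open>auto simp: not_less[symmetric]\<close>)
qed

lemma srk_single_dest:
  assumes "srk U {w} = enat i"
  shows "i < length U \<and> w \<in> U ! i \<and> (\<forall>j<i. w \<notin> U ! j)"
proof -
  define X where "X = {enat i |i. i < length U \<and> U ! i \<inter> {w} \<noteq> {}}"
  have sX: "srk U {w} = Inf X" unfolding X_def srk_def by simp
  have "X \<noteq> {}" using assms sX by (auto simp: top_enat_def)
  then have "Inf X \<in> X" unfolding Inf_enat_def by (auto intro: LeastI)
  then have "enat i \<in> X" using assms sX by simp
  then have 1: "i < length U \<and> w \<in> U ! i" unfolding X_def by auto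
  have "w \<notin> U ! j" if "j < i" for j
  proof
    assume "w \<in> U ! j"
    then have "enat j \<in> X" using that 1 unfolding X_def by auto
    then have "Inf X \<le> enat j" by (rule Inf_lower)
    then show False using assms sX that by simp
  qed
  then show ?thesis using 1 by blast
qed

lemma concat_nth:
  "i < length U \<Longrightarrow> j < length V \<Longrightarrow>
   concat (map (\<lambda>v. map (\<lambda>u. u \<inter> v) U) V) ! (j * length U + i) = U ! i \<inter> V ! j"
proof (induction V arbitrary: j)
  case Nil
  then show ?case by simp
next
  case (Cons v V)
  then show ?case
  proof (cases j)
    case 0
    then show ?thesis using Cons by (simp add: nth_append)
  next
    case (Suc j')
    then show ?thesis using Cons by (simp add: nth_append add.assoc)
  qed
qed

lemma length_R: "length (concat (map (\<lambda>v. map (\<lambda>u. u \<inter> v) U) V)) = length V * length U"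
  by (induction V) auto

lemma lex_less:
  fixes n :: nat
  assumes "i < n" "i' < n"
  shows "j * n + i < j' * n + i' \<longleftrightarrow> j < j' \<or> (j = j' \<and> i < i')"
proof -
  have a: "j * n + i < j' * n + i'" if "j < j'" "i < n" for j j' i i'
  proof -
    have "j * n + i < Suc j * n" using that by simp
    also have "\<dots> \<le> j' * n" using that by (intro mult_le_mono1) simp
    finally show ?thesis by simp
  qed
  consider "j < j'" | "j = j'" | "j' < j" by arith
  then show ?thesis
  proof cases
    case 1
    then show ?thesis using a[OF 1 assms(1), of i'] by simp
  next
    case 2
    then show ?thesis by simp
  next
    case 3
    then show ?thesis using a[OF 3 assms(2), of i] by simp
  qed
qed

lemma rank_rev:
  assumes "full_seq U" "full_seq V" "srk U {w} = enat iU" "srk V {w} = enat jV"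
  shows "srk (seq_rev U V) {w} = enat (jV * length U + iU)"
proof -
  let ?R = "concat (map (\<lambda>v. map (\<lambda>u. u \<inter> v) U) V)"
  let ?n = "length U"
  have R: "seq_rev U V = ?R" using assms(1) unfolding seq_rev_def by simp
  have dU: "iU < ?n" "w \<in> U ! iU" "\<And>j. j < iU \<Longrightarrow> w \<notin> U ! j"
    using srk_single_dest[OF assms(3)] by blast+
  have dV: "jV < length V" "w \<in> V ! jV" "\<And>j. j < jV \<Longrightarrow> w \<notin> V ! j"
    using srk_single_dest[OF assms(4)] by blast+
  have "jV * ?n + iU < Suc jV * ?n" using dU(1) by simp
  also have "\<dots> \<le> length V * ?n" using dV(1) by (intro mult_le_mono1) simp
  finally have lt: "jV * ?n + iU < length ?R" unfolding length_R .
  have inn: "w \<in> ?R ! (jV * ?n + iU)" unfolding concat_nth[OF dU(1) dV(1)] using dU(2) dV(2) by blast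
  have notin: "w \<notin> ?R ! m" if "m < jV * ?n + iU" for m
  proof -
    have np: "0 < ?n" using dU(1) by linarith
    have mlt: "m mod ?n < ?n" using np by simp
    have "m < length V * ?n" using that lt unfolding length_R by linarith
    then have mv: "m div ?n < length V" by (simp add: less_mult_imp_div_less)
    have Rm: "?R ! m = U ! (m mod ?n) \<inter> V ! (m div ?n)"
      using concat_nth[OF mlt mv] unfolding div_mult_mod_eq .
    have "m div ?n < jV \<or> (m div ?n = jV \<and> m mod ?n < iU)"
      using lex_less[OF mlt dU(1), of "m div ?n" jV] that unfolding div_mult_mod_eq by blast
    then show ?thesis
    proof
      assume "m div ?n < jV"
      then show ?thesis using Rm dV(3) by blast
    next
      assume "m div ?n = jV \<and> m mod ?n < iU"
      then show ?thesis using Rm dU(3) by blast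
    qed
  qed
  show ?thesis unfolding R using notin by (intro srk_single_eq[OF lt inn]) blast
qed

lemma lex_le:
  fixes n :: nat
  assumes "i < n" "i' < n"
  shows "j * n + i \<le> j' * n + i' \<longleftrightarrow> j < j' \<or> (j = j' \<and> i \<le> i')"
proof -
  have "j * n + i \<le> j' * n + i' \<longleftrightarrow> \<not> (j' * n + i' < j * n + i)" by (simp add: not_less)
  also have "\<dots> \<longleftrightarrow> \<not> (j' < j \<or> (j' = j \<and> i' < i))" using lex_less[OF assms(2) assms(1)] by simp
  also have "\<dots> \<longleftrightarrow> j < j' \<or> (j = j' \<and> i \<le> i')" by auto
  finally show ?thesis .
qed

definition fx :: "'v world set list \<Rightarrow> 'v world \<Rightarrow> nat" where
  "fx U a = the_enat (srk U {a})"

lemma fx_eq: "full_seq U \<Longrightarrow> srk U {a} = enat (fx U a)"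
  unfolding fx_def using full_fin[of U a] by (cases "srk U {a}") auto

lemma fx_lt: "full_seq U \<Longrightarrow> fx U a < length U"
  using srk_single_dest[OF fx_eq] by blast

lemma rev_order:
  assumes "full_seq U" "full_seq V"
  shows "srk (seq_rev U V) {a} \<le> srk (seq_rev U V) {b} \<longleftrightarrow>
         fx V a < fx V b \<or> (fx V a = fx V b \<and> fx U a \<le> fx U b)"
  unfolding rank_rev[OF assms fx_eq[OF assms(1)] fx_eq[OF assms(2)]]
  using lex_le[OF fx_lt[OF assms(1)] fx_lt[OF assms(1)]] by simp

lemma rev_fin:
  assumes "full_seq U" "full_seq V"
  shows "srk (seq_rev U V) {a} \<noteq> \<infinity>"
  unfolding rank_rev[OF assms fx_eq[OF assms(1)] fx_eq[OF assms(2)]] by simp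

lemma fx_equiv:
  assumes "\<And>A B. srk U1 A \<le> srk U1 B \<longleftrightarrow> srk U2 A \<le> srk U2 B" "full_seq U1" "full_seq U2"
  shows "fx U1 a \<le> fx U1 b \<longleftrightarrow> fx U2 a \<le> fx U2 b"
  using assms(1)[of "{a}" "{b}"] unfolding fx_eq[OF assms(2)] fx_eq[OF assms(3)] by simp

theorem proposition5:
  fixes U1 U2 V1 V2 :: "('v::finite) world set list"
  assumes "U1 \<in> Upsilon" and "U2 \<in> Upsilon" and "V1 \<in> Upsilon" and "V2 \<in> Upsilon"
    and "seq_pref U1 = seq_pref U2" and "seq_pref V1 = seq_pref V2"
  shows "seq_pref (seq_rev U1 V1) = seq_pref (seq_rev U2 V2)"
proof -
  have QU: "\<And>A B. srk U1 A \<le> srk U1 B \<longleftrightarrow> srk U2 A \<le> srk U2 B" by (rule pref_Q[OF assms(5)])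
  have QV: "\<And>A B. srk V1 A \<le> srk V1 B \<longleftrightarrow> srk V2 A \<le> srk V2 B" by (rule pref_Q[OF assms(6)])
  have fU: "full_seq U1 \<longleftrightarrow> full_seq U2" using full_iff[OF assms(1)] full_iff[OF assms(2)] QU by blast
  have fV: "full_seq V1 \<longleftrightarrow> full_seq V2" using full_iff[OF assms(3)] full_iff[OF assms(4)] QV by blast
  show ?thesis
  proof (cases "full_seq U1")
    case False
    then have "seq_rev U1 V1 = V1" "seq_rev U2 V2 = V2" using fU unfolding seq_rev_def by auto
    then show ?thesis using assms(6) by simp
  next
    case hU1: True
    then have hU2: "full_seq U2" using fU by simp
    show ?thesis
    proof (cases "full_seq V1")
      case False
      then have "empty_seq V1" "empty_seq V2" using fV assms(3,4) unfolding Upsilon_def by auto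
      then have "empty_seq (seq_rev U1 V1)" "empty_seq (seq_rev U2 V2)"
        using hU1 hU2 unfolding seq_rev_def empty_seq_def by auto
      then show ?thesis by (intro Q_pref) (simp add: empty_inf)
    next
      case hV1: True
      then have hV2: "full_seq V2" using fV by simp
      have eU: "fx U1 a \<le> fx U1 b \<longleftrightarrow> fx U2 a \<le> fx U2 b" for a b by (rule fx_equiv[OF QU hU1 hU2])
      have eV: "fx V1 a \<le> fx V1 b \<longleftrightarrow> fx V2 a \<le> fx V2 b" for a b by (rule fx_equiv[OF QV hV1 hV2])
      have eV': "fx V1 a < fx V1 b \<longleftrightarrow> fx V2 a < fx V2 b" for a b
        using eV[of b a] by (simp add: not_le[symmetric])
      have eV'': "fx V1 a = fx V1 b \<longleftrightarrow> fx V2 a = fx V2 b" for a b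
        using eV[of b a] eV[of a b] by (simp add: eq_iff)
      show ?thesis
      proof (rule Q_pref)
        fix A B
        show "srk (seq_rev U1 V1) A \<le> srk (seq_rev U1 V1) B \<longleftrightarrow> srk (seq_rev U2 V2) A \<le> srk (seq_rev U2 V2) B"
        proof (rule G)
          fix a b
          show "srk (seq_rev U1 V1) {a} \<le> srk (seq_rev U1 V1) {b} \<longleftrightarrow> srk (seq_rev U2 V2) {a} \<le> srk (seq_rev U2 V2) {b}"
            unfolding rev_order[OF hU1 hV1] rev_order[OF hU2 hV2] using eU eV' eV'' by blast
        qed (auto simp: rev_fin hU1 hV1 hU2 hV2)
      qed
    qed
  qed
qed

end
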